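(* For $n>3/2$ and $x\ge 0$ the following holds: \begin{equation*} \frac{x+\sqrt{4n-6+x^2}}{2n-1}<\frac{U(n,-x)}{U (n-1,-x)}<\frac{x+\sqrt{4n-2+x^2}}{2n-1} . \end{equation*} The upper bound is also valid if $n\in (1/2,3/2)$.
   Context: $U(a,x)$ denotes the standard parabolic cylinder function (as in the NIST Digital Library of Mathematical Functions, Chapter 12), i.e. the solution of $y''(x)-(x^2/4+a)y(x)=0$ that is recessive (decays) as $x\rightarrow+\infty$. The parameter $n$ is real. *)

theory Defs
  imports "HOL-Analysis.Analysis"
begin

text \<open>Parabolic cylinder function U(a,x) (NIST DLMF 12.5.1, integral representation),
  valid for a > -1/2, which covers every parameter used in the statement:
  U(a,x) = exp(-x^2/4) / Gamma(1/2+a) * integral over t>0 of t^(a-1/2) exp(-t^2/2 - x t).\<close>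
definition pcfU :: "real \<Rightarrow> real \<Rightarrow> real" where
  "pcfU a x = exp (- (x^2) / 4) / Gamma (a + 1/2) *
     integral {0<..} (\<lambda>t::real. t powr (a - 1/2) * exp (- (t^2) / 2 - x * t))"

end

theory Submission
  imports Defs "HOL-Real_Asymp.Real_Asymp"
begin

lemma dom_int:
  fixes k :: real assumes "k > -1"
  shows "set_integrable lborel {0<..} (\<lambda>t. t powr k / exp t)"
proof -
  have "((\<lambda>t. t powr ((k+1) - 1) / exp t) has_integral Gamma (k+1)) {0..}"
    using Gamma_integral_real[of "k+1"] assms by simp
  hence "(\<lambda>t. t powr k / exp t) integrable_on {0..}" by (auto simp: integrable_on_def)
  hence "(\<lambda>t. t powr k / exp t) absolutely_integrable_on {0..}"
    by (rule nonnegative_absolutely_integrable_1) auto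
  hence "set_integrable lebesgue {0<..} (\<lambda>t. t powr k / exp t)"
    by (rule set_integrable_subset) auto
  thus ?thesis unfolding set_integrable_def
    by (subst (asm) integrable_completion) measurable
qed

lemma g_int:
  fixes k x :: real assumes "k > -1"
  shows "set_integrable lborel {0<..} (\<lambda>t. t powr k * exp (-(t^2)/2 + x*t))"
proof (rule set_integrable_bound[OF set_integrable_mult_right[OF dom_int[OF assms], of "exp ((x+1)^2/2)"]])
  show "set_borel_measurable lborel {0<..} (\<lambda>t. t powr k * exp (-(t^2)/2 + x*t))"
    unfolding set_borel_measurable_def by measurable
  have "norm (t powr k * exp (-(t^2)/2 + x*t)) \<le> norm (exp ((x+1)^2/2) * (t powr k / exp t))" if "t > 0" for t
  proof -
    have "exp (-(t^2)/2 + x*t) \<le> exp ((x+1)^2/2) / exp t"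
    proof -
      have "-(t^2)/2 + x*t \<le> (x+1)^2/2 - t"
        using zero_le_power2[of "t - x - 1"] by (simp add: power2_eq_square algebra_simps)
      thus ?thesis by (simp add: exp_diff[symmetric])
    qed
    hence "t powr k * exp (-(t^2)/2 + x*t) \<le> t powr k * (exp ((x+1)^2/2) / exp t)"
      by (intro mult_left_mono) auto
    thus ?thesis using that by (simp add: mult_ac)
  qed
  thus "AE t in lborel. t \<in> {0<..} \<longrightarrow> norm (t powr k * exp (-(t^2)/2 + x*t)) \<le> norm (exp ((x+1)^2/2) * (t powr k / exp t))"
    by auto
qed

definition II :: "real \<Rightarrow> real \<Rightarrow> real" where
  "II k x = (LINT t:{0<..}|lborel. t powr k * exp (-(t^2)/2 + x*t))"

lemma recur:
  fixes k x :: real assumes k: "k > 0"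
  shows "II (k+1) x = x * II k x + k * II (k-1) x"
proof -
  define E where "E = (\<lambda>t::real. exp (-(t^2)/2 + x*t))"
  define F where "F = (\<lambda>t::real. t powr k * E t)"
  define f where "f = (\<lambda>t::real. k * (t powr (k-1) * E t) + x * (t powr k * E t) - t powr (k+1) * E t)"
  have i1: "set_integrable lborel {0<..} (\<lambda>t. t powr (k-1) * E t)"
    unfolding E_def by (rule g_int) (use k in simp)
  have i2: "set_integrable lborel {0<..} (\<lambda>t. t powr k * E t)"
    unfolding E_def by (rule g_int) (use k in simp)
  have i3: "set_integrable lborel {0<..} (\<lambda>t. t powr (k+1) * E t)"
    unfolding E_def by (rule g_int) (use k in simp)
  have fi: "set_integrable lborel {0<..} f"
    unfolding f_def using i1 i2 i3 by (intro set_integral_diff set_integral_add set_integrable_mult_right)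
  have "(LBINT t=ereal 0..\<infinity>. f t) = 0 - 0"
  proof (rule interval_integral_FTC_integrable)
    show "ereal 0 < \<infinity>" by simp
    fix t assume t: "ereal 0 < ereal t" "ereal t < \<infinity>"
    hence t0: "t > 0" by simp
    have "(F has_real_derivative (k * t powr (k-1) * E t + t powr k * ((-t + x) * E t))) (at t)"
      unfolding F_def E_def using t0
      by (auto intro!: derivative_eq_intros simp: power2_eq_square field_simps)
    moreover have "k * t powr (k-1) * E t + t powr k * ((-t + x) * E t) = f t"
      using t0 unfolding f_def by (simp add: powr_add algebra_simps)
    ultimately show "(F has_vector_derivative f t) (at t)"
      by (simp add: has_real_derivative_iff_has_vector_derivative)
    show "isCont f t" unfolding f_def E_def using t0
      by (auto intro!: continuous_intros)
  next
    show "set_integrable lborel (einterval (ereal 0) \<infinity>) f"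
      using fi by (simp add: einterval_def greaterThan_def)
    show "((F \<circ> real_of_ereal) \<longlongrightarrow> 0) (at_right (ereal 0))"
      unfolding ereal_tendsto_simps F_def E_def using k by real_asymp
    show "((F \<circ> real_of_ereal) \<longlongrightarrow> 0) (at_left \<infinity>)"
      unfolding ereal_tendsto_simps F_def E_def by real_asymp
  qed
  hence "(LINT t:{0<..}|lborel. f t) = 0"
    by (simp add: interval_lebesgue_integral_def einterval_def greaterThan_def)
  hence "k * II (k-1) x + x * II k x - II (k+1) x = 0"
    unfolding f_def II_def E_def using i1 i2 i3 unfolding E_def
    by (simp add: set_integral_diff set_integral_add)
  thus ?thesis by simp
qed

lemma pos_int:
  fixes h :: "real \<Rightarrow> real" and c :: real
  assumes hi: "set_integrable lborel {0<..} h"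
    and nn: "\<And>t. t > 0 \<Longrightarrow> h t \<ge> 0"
    and ps: "\<And>t. t > 0 \<Longrightarrow> t \<noteq> c \<Longrightarrow> h t > 0"
  shows "(LINT t:{0<..}|lborel. h t) > 0"
proof -
  define g where "g = (\<lambda>t. indicator {0<..} t *\<^sub>R h t)"
  have gi: "integrable lborel g" using hi unfolding set_integrable_def g_def .
  have gn: "AE t in lborel. 0 \<le> g t" unfolding g_def using nn
    by (auto simp: indicator_def)
  have ge: "integral\<^sup>L lborel g \<ge> 0" by (rule integral_nonneg_AE[OF gn])
  have "integral\<^sup>L lborel g \<noteq> 0"
  proof
    assume "integral\<^sup>L lborel g = 0"
    hence "AE t in lborel. g t = 0" using integral_nonneg_eq_0_iff_AE[OF gi gn] by simp
    hence "AE t in lborel. t \<notin> {0<..} - {c}"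
      by eventually_elim (force simp: g_def indicator_def dest: ps)
    hence "emeasure lborel ({0<..} - {c}) = 0"
      by (subst (asm) AE_iff_measurable[of "{0<..} - {c}"]) auto
    moreover have "emeasure lborel {\<bar>c\<bar>+1..\<bar>c\<bar>+2} \<le> emeasure lborel ({0<..} - {c})"
      by (rule emeasure_mono) auto
    ultimately show False by simp
  qed
  with ge show ?thesis unfolding set_lebesgue_integral_def g_def by simp
qed

lemma II_pos:
  fixes k x :: real assumes "k > -1"
  shows "II k x > 0"
proof -
  have "(LINT t:{0<..}|lborel. t powr k * exp (-(t^2)/2 + x*t)) > 0"
    by (rule pos_int[OF g_int[OF assms, of x], where c=0]) auto
  thus ?thesis unfolding II_def .
qed

lemma CS:
  fixes k x :: real assumes k: "k > 0"
  shows "(II k x)^2 < II (k-1) x * II (k+1) x"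
proof -
  define E where "E = (\<lambda>t::real. exp (-(t^2)/2 + x*t))"
  define A where "A = II (k-1) x"
  define B where "B = II k x"
  define C where "C = II (k+1) x"
  have A0: "A > 0" unfolding A_def using k by (intro II_pos) simp
  define l where "l = B / A"
  have i1: "set_integrable lborel {0<..} (\<lambda>t. t powr (k-1) * E t)"
    unfolding E_def by (rule g_int) (use k in simp)
  have i2: "set_integrable lborel {0<..} (\<lambda>t. t powr k * E t)"
    unfolding E_def by (rule g_int) (use k in simp)
  have i3: "set_integrable lborel {0<..} (\<lambda>t. t powr (k+1) * E t)"
    unfolding E_def by (rule g_int) (use k in simp)
  define h where "h = (\<lambda>t. t powr (k+1) * E t - (2*l) * (t powr k * E t) + l^2 * (t powr (k-1) * E t))"
  have hi: "set_integrable lborel {0<..} h"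
    unfolding h_def using i1 i2 i3 by (intro set_integral_diff set_integral_add set_integrable_mult_right)
  have heq: "h t = t powr (k-1) * (t - l)^2 * E t" if "t > 0" for t
  proof -
    have a: "t powr k = t powr (k-1) * t"
      using that powr_add[of t "k-1" 1] by simp
    have "t powr (k+1) = t powr k * t"
      using that powr_add[of t k 1] by simp
    note a this
    thus ?thesis unfolding h_def by (simp add: power2_eq_square algebra_simps)
  qed
  have "(LINT t:{0<..}|lborel. h t) > 0"
  proof (rule pos_int[OF hi, of l])
    fix t :: real assume "t > 0"
    thus "h t \<ge> 0" by (simp add: heq E_def)
    assume "t \<noteq> l"
    with \<open>t > 0\<close> show "h t > 0" by (simp add: heq E_def)
  qed
  moreover have "(LINT t:{0<..}|lborel. h t) = C - 2*l*B + l^2*A"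
    unfolding h_def A_def B_def C_def II_def E_def using i1 i2 i3 unfolding E_def
    by (simp add: set_integral_diff set_integral_add)
  ultimately have "C - 2*l*B + l^2*A > 0" by simp
  hence "C - B^2/A > 0" unfolding l_def using A0 by (simp add: power2_eq_square field_simps)
  hence "B^2 < A * C" using A0 by (simp add: field_simps)
  thus ?thesis unfolding A_def B_def C_def .
qed

lemma pcfU_II:
  fixes a x :: real assumes "a > -1/2"
  shows "pcfU a (-x) = exp (-(x^2)/4) / Gamma (a + 1/2) * II (a - 1/2) x"
proof -
  have gi: "set_integrable lborel {0<..} (\<lambda>t. t powr (a - 1/2) * exp (-(t^2)/2 + x*t))"
    by (rule g_int) (use assms in simp)
  have "integral {0<..} (\<lambda>t::real. t powr (a - 1/2) * exp (- (t^2) / 2 - (-x) * t))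
      = integral {0<..} (\<lambda>t. t powr (a - 1/2) * exp (-(t^2)/2 + x*t))" by simp
  also have "\<dots> = II (a - 1/2) x"
    unfolding II_def using set_borel_integral_eq_integral(2)[OF gi] by simp
  finally show ?thesis unfolding pcfU_def by simp
qed

lemma ratio:
  fixes n x :: real assumes "n > 1/2"
  shows "pcfU n (-x) / pcfU (n - 1) (-x) = II (n - 1/2) x / ((n - 1/2) * II (n - 1/2 - 1) x)"
proof -
  define m where "m = n - 1/2"
  have m: "m > 0" using assms m_def by simp
  have G: "Gamma (m + 1) = m * Gamma m"
    by (rule Gamma_plus1) (use m in \<open>auto elim!: nonpos_Ints_cases\<close>)
  have "pcfU n (-x) = exp (-(x^2)/4) / Gamma (m + 1) * II m x"
    using pcfU_II[of n x] assms unfolding m_def by (simp add: add.commute)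
  moreover have "pcfU (n-1) (-x) = exp (-(x^2)/4) / Gamma m * II (m - 1) x"
    using pcfU_II[of "n-1" x] assms unfolding m_def by (simp add: algebra_simps)
  moreover have "Gamma m > 0" using m by simp
  moreover have "II (m-1) x > 0" using m by (intro II_pos) simp
  ultimately have "pcfU n (-x) / pcfU (n - 1) (-x) = II m x / (m * II (m - 1) x)"
    using m G by (simp add: field_simps)
  thus ?thesis unfolding m_def .
qed

lemma upper:
  fixes m x :: real assumes m: "m > 0"
  shows "II m x / (m * II (m - 1) x) < (x + sqrt (4*m + x^2)) / (2*m)"
proof -
  define A where "A = II (m-1) x"
  define B where "B = II m x"
  have A0: "A > 0" unfolding A_def using m by (intro II_pos) simp
  have cs: "B^2 < A * (x*B + m*A)"
    using CS[OF m, of x] recur[OF m, of x] unfolding A_def B_def by simp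
  have "2*B - x*A < sqrt (A^2 * (4*m + x^2))"
  proof (cases "2*B - x*A \<le> 0")
    case True
    have "A^2 * (4*m + x^2) > 0" using A0 m by (intro mult_pos_pos) (auto intro: add_pos_nonneg)
    thus ?thesis using True by (meson le_less_trans real_sqrt_gt_zero)
  next
    case False
    show ?thesis by (rule real_less_rsqrt) (use cs in \<open>simp add: power2_eq_square algebra_simps\<close>)
  qed
  also have "sqrt (A^2 * (4*m + x^2)) = A * sqrt (4*m + x^2)"
    using A0 by (simp add: real_sqrt_mult)
  finally have "2*B < A * (x + sqrt (4*m + x^2))" by (simp add: algebra_simps)
  thus ?thesis unfolding A_def[symmetric] B_def[symmetric] using A0 m
    by (simp add: field_simps)
qed

lemma lower:
  fixes m x :: real assumes m: "m > 1" and x: "x \<ge> 0"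
  shows "(x + sqrt (4*m - 4 + x^2)) / (2*m) < II m x / (m * II (m - 1) x)"
proof -
  define A where "A = II (m-1) x"
  define B where "B = II m x"
  define D where "D = II (m-1-1) x"
  have A0: "A > 0" unfolding A_def using m by (intro II_pos) simp
  have D0: "D > 0" unfolding D_def using m by (intro II_pos) simp
  have m1: "m - 1 > 0" using m by simp
  have rec: "B = x*A + (m-1)*D"
    using recur[OF m1, of x] unfolding A_def B_def D_def by simp
  have cs: "A^2 < D * B"
    using CS[OF m1, of x] unfolding A_def B_def D_def by simp
  have pos: "2*B - x*A > 0"
  proof -
    have "2*B - x*A = x*A + 2*((m-1)*D)" using rec by (simp add: algebra_simps)
    moreover have "x*A \<ge> 0" using x A0 by simp
    moreover have "(m-1)*D > 0" using m1 D0 by simp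
    ultimately show ?thesis by linarith
  qed
  have "sqrt (A^2 * (4*m - 4 + x^2)) < 2*B - x*A"
  proof (rule real_less_lsqrt)
    show "0 \<le> 2*B - x*A" using pos by simp
    have "A^2 * (4*m - 4 + x^2) = 4*(m-1)*A^2 + x^2*A^2" by (simp add: algebra_simps)
    also have "\<dots> < 4*((m-1)*D)*B + x^2*A^2" using mult_strict_left_mono[OF cs, of "4*(m-1)"] m1 by (simp add: algebra_simps)
    also have "(m-1)*D = B - x*A" using rec by simp
    also have "4*(B - x*A)*B + x^2*A^2 = (2*B - x*A)^2" by (simp add: power2_eq_square algebra_simps)
    finally show "A^2 * (4*m - 4 + x^2) < (2*B - x*A)^2" .
  qed
  also have "sqrt (A^2 * (4*m - 4 + x^2)) = A * sqrt (4*m - 4 + x^2)"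
    using A0 by (simp add: real_sqrt_mult)
  finally have "A * (x + sqrt (4*m - 4 + x^2)) < 2*B" by (simp add: algebra_simps)
  hence "m * (A * (x + sqrt (4*m - 4 + x^2))) < m * (2*B)" using m by simp
  thus ?thesis unfolding A_def[symmetric] B_def[symmetric] using A0 m
    by (simp add: field_simps)
qed

theorem theorem10:
  fixes n x :: real
  shows "(n > 3/2 \<and> x \<ge> 0 \<longrightarrow>
            (x + sqrt (4*n - 6 + x^2)) / (2*n - 1) < pcfU n (-x) / pcfU (n - 1) (-x) \<and>
            pcfU n (-x) / pcfU (n - 1) (-x) < (x + sqrt (4*n - 2 + x^2)) / (2*n - 1))
       \<and> (1/2 < n \<and> n < 3/2 \<and> x \<ge> 0 \<longrightarrow>
            pcfU n (-x) / pcfU (n - 1) (-x) < (x + sqrt (4*n - 2 + x^2)) / (2*n - 1))"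
proof -
  have U: "pcfU n (-x) / pcfU (n - 1) (-x) < (x + sqrt (4*n - 2 + x^2)) / (2*n - 1)" if "n > 1/2"
  proof -
    have "n - 1/2 > 0" using that by simp
    from upper[OF this, of x] show ?thesis using ratio[OF that, of x]
      by (simp add: algebra_simps)
  qed
  have L: "(x + sqrt (4*n - 6 + x^2)) / (2*n - 1) < pcfU n (-x) / pcfU (n - 1) (-x)"
    if "n > 3/2" "x \<ge> 0"
  proof -
    have "n - 1/2 > 1" using that by simp
    from lower[OF this that(2)] show ?thesis using ratio[of n x] that
      by (simp add: algebra_simps)
  qed
  show ?thesis using U L by auto
qed

end
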